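(* Let $k>8$ be an integer, let $\theta=2\pi/k$, and let $\lambda>0$ be a real number such that $\cos\theta-\sin\theta>\frac{1}{\lambda+1}$. Let $G=(V,E)$ be a $\lambda$-civilized unit disk graph, and let $YY_k$ be the Yao-Yao graph of $G$ (defined in the context). Then for every real $t\ge \frac{\lambda}{(\lambda+1)(\cos\theta-\sin\theta)-1}$, the graph $YY_k$ is a length $t$-spanner of $G$.
   Context: Unit disk graph (UDG): $V$ is a finite set of points in the Euclidean plane and $E=\{uv: u,v\in V,\ u\neq v,\ |uv|\le 1\}$, where $|uv|$ is Euclidean distance; $G$ is assumed connected. $G$ is $\lambda$-civilized if no two nodes of $V$ are at distance smaller than $\lambda$. A subgraph $H$ of $G$ on the same vertex set is a length $t$-spanner of $G$ if for all $u,v\in V$ the length (sum of Euclidean edge lengths) of a shortest $uv$-path in $H$ is at most $t$ times the length of a shortest $uv$-path in $G$. Cones: for each point $u$, the plane is partitioned into $k$ cones with apex $u$, each of angle $\theta=2\pi/k$, bounded by $k$ equally spaced rays from $u$ (the same ray directions at every node); each cone is half-open, half-closed. $K_u(v)$ denotes the cone with apex $u$ containing $v$. An edge $uw$ incident to $u$ lies in a cone $K_u$ if $w\in K_u$. Identifiers: each node has a distinct identifier $\mathrm{ID}(u)$. For a directed edge $\overrightarrow{uv}$, $\mathrm{ID}(\overrightarrow{uv})=(|uv|,\mathrm{ID}(u),\mathrm{ID}(v))$, compared lexicographically; for an undirected edge, $\mathrm{ID}(uv)=\min\{\mathrm{ID}(\overrightarrow{uv}),\mathrm{ID}(\overrightarrow{vu})\}$.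 Yao step: $E_Y=\emptyset$; for each node $u$ and each cone $K_u$ such that some edge of $E$ incident to $u$ lies in $K_u$, pick the edge $uv$ of $E$ lying in $K_u$ with lowest $\mathrm{ID}(uv)$ and add the directed edge $\overrightarrow{uv}$ to $E_Y$. The Yao graph is $Y_k=(V,E_Y)$. Reverse Yao step: start with $E_{YY}=E_Y$; for each node $v$ and each cone $K_v$, among all edges $\overrightarrow{uv}\in E_Y$ with sink $v$ and $u\in K_v$, delete all from $E_{YY}$ except the one with smallest ID. The Yao-Yao graph $YY_k=(V,E_{YY})$ is viewed as an undirected graph. *)

theory Defs
  imports Complex_Main
begin

text \<open>Points of the Euclidean plane are modelled as complex numbers; dist is Euclidean distance.\<close>

definition udg_edges :: "complex set \<Rightarrow> (complex \<times> complex) set" where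
  "udg_edges V = {(u, v). u \<in> V \<and> v \<in> V \<and> u \<noteq> v \<and> dist u v \<le> 1}"

definition civilized :: "real \<Rightarrow> complex set \<Rightarrow> bool" where
  "civilized lam V \<longleftrightarrow> (\<forall>u\<in>V. \<forall>v\<in>V. u \<noteq> v \<longrightarrow> lam \<le> dist u v)"

fun is_walk :: "(complex \<times> complex) set \<Rightarrow> complex list \<Rightarrow> bool" where
  "is_walk E [] = False"
| "is_walk E [x] = True"
| "is_walk E (x # y # xs) = ((x, y) \<in> E \<and> is_walk E (y # xs))"

definition walk_from_to :: "(complex \<times> complex) set \<Rightarrow> complex list \<Rightarrow> complex \<Rightarrow> complex \<Rightarrow> bool" where
  "walk_from_to E p u v \<longleftrightarrow> is_walk E p \<and> hd p = u \<and> last p = v"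

fun walk_len :: "complex list \<Rightarrow> real" where
  "walk_len [] = 0"
| "walk_len [x] = 0"
| "walk_len (x # y # xs) = dist x y + walk_len (y # xs)"

definition connected_on :: "complex set \<Rightarrow> (complex \<times> complex) set \<Rightarrow> bool" where
  "connected_on V E \<longleftrightarrow> (\<forall>u\<in>V. \<forall>v\<in>V. \<exists>p. walk_from_to E p u v)"

text \<open>Length of a shortest uv-path (infimum of walk lengths; attained since simple paths suffice).\<close>
definition sp_len :: "(complex \<times> complex) set \<Rightarrow> complex \<Rightarrow> complex \<Rightarrow> real" where
  "sp_len E u v = Inf (walk_len ` {p. walk_from_to E p u v})"

definition length_spanner :: "complex set \<Rightarrow> (complex \<times> complex) set \<Rightarrow> (complex \<times> complex) set \<Rightarrow> real \<Rightarrow> bool" where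
  "length_spanner V H E t \<longleftrightarrow>
     (\<forall>u\<in>V. \<forall>v\<in>V. (\<exists>p. walk_from_to H p u v) \<and> sp_len H u v \<le> t * sp_len E u v)"

text \<open>Cones: k cones of angle 2pi/k, bounded by rays at directions alpha + i*2pi/k (same at every node).
  The cone with apex u containing v has index floor(k * frac((arg(v-u) - alpha)/(2pi))),
  i.e. cone i is the half-open angular range [alpha + i theta, alpha + (i+1) theta).\<close>
definition cone_idx :: "nat \<Rightarrow> real \<Rightarrow> complex \<Rightarrow> complex \<Rightarrow> int" where
  "cone_idx k alpha u v = \<lfloor>real k * frac ((Arg (v - u) - alpha) / (2 * pi))\<rfloor>"

definition lex_le :: "real \<times> nat \<times> nat \<Rightarrow> real \<times> nat \<times> nat \<Rightarrow> bool" where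
  "lex_le a b \<longleftrightarrow> (case a of (d1, i1, j1) \<Rightarrow> case b of (d2, i2, j2) \<Rightarrow>
      d1 < d2 \<or> (d1 = d2 \<and> (i1 < i2 \<or> (i1 = i2 \<and> j1 \<le> j2))))"

definition lex_min :: "real \<times> nat \<times> nat \<Rightarrow> real \<times> nat \<times> nat \<Rightarrow> real \<times> nat \<times> nat" where
  "lex_min a b = (if lex_le a b then a else b)"

definition dir_edge_id :: "(complex \<Rightarrow> nat) \<Rightarrow> complex \<Rightarrow> complex \<Rightarrow> real \<times> nat \<times> nat" where
  "dir_edge_id ID u v = (dist u v, ID u, ID v)"

definition edge_id :: "(complex \<Rightarrow> nat) \<Rightarrow> complex \<Rightarrow> complex \<Rightarrow> real \<times> nat \<times> nat" where
  "edge_id ID u v = lex_min (dir_edge_id ID u v) (dir_edge_id ID v u)"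

definition yao_edges :: "nat \<Rightarrow> real \<Rightarrow> (complex \<Rightarrow> nat) \<Rightarrow> complex set \<Rightarrow> (complex \<times> complex) set" where
  "yao_edges k alpha ID V = {(u, v). (u, v) \<in> udg_edges V \<and>
     (\<forall>w. (u, w) \<in> udg_edges V \<and> cone_idx k alpha u w = cone_idx k alpha u v
          \<longrightarrow> lex_le (edge_id ID u v) (edge_id ID u w))}"

definition yao_yao_dir :: "nat \<Rightarrow> real \<Rightarrow> (complex \<Rightarrow> nat) \<Rightarrow> complex set \<Rightarrow> (complex \<times> complex) set" where
  "yao_yao_dir k alpha ID V = {(u, v). (u, v) \<in> yao_edges k alpha ID V \<and>
     (\<forall>w. (w, v) \<in> yao_edges k alpha ID V \<and> cone_idx k alpha v w = cone_idx k alpha v u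
          \<longrightarrow> lex_le (edge_id ID u v) (edge_id ID w v))}"

definition yao_yao_edges :: "nat \<Rightarrow> real \<Rightarrow> (complex \<Rightarrow> nat) \<Rightarrow> complex set \<Rightarrow> (complex \<times> complex) set" where
  "yao_yao_edges k alpha ID V = yao_yao_dir k alpha ID V \<union> (yao_yao_dir k alpha ID V)\<inverse>"

end

theory Submission
  imports Defs "HOL-Library.Product_Lexorder"
begin

lemma cos_shift_int: "cos (y + (2*pi) * of_int n) = cos y"
  by (simp add: cos_add)

lemma cone_cos:
  fixes z1 z2 :: complex and k :: nat
  assumes "z1 \<noteq> 0" "z2 \<noteq> 0" "k \<ge> 2"
    and eq: "\<lfloor>real k * frac ((Arg z1 - alpha) / (2 * pi))\<rfloor> = \<lfloor>real k * frac ((Arg z2 - alpha) / (2 * pi))\<rfloor>"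
  shows "Re z1 * Re z2 + Im z1 * Im z2 \<ge> cos (2*pi/k) * norm z1 * norm z2"
proof -
  define x1 where "x1 = (Arg z1 - alpha) / (2 * pi)"
  define x2 where "x2 = (Arg z2 - alpha) / (2 * pi)"
  have kpos: "real k > 0" using assms by simp
  have "\<bar>real k * frac x1 - real k * frac x2\<bar> < 1"
    using eq unfolding x1_def[symmetric] x2_def[symmetric]
    by linarith
  moreover have "\<bar>real k * frac x1 - real k * frac x2\<bar> = real k * \<bar>frac x1 - frac x2\<bar>"
    using kpos by (simp add: right_diff_distrib[symmetric] abs_mult)
  ultimately have fd: "\<bar>frac x1 - frac x2\<bar> < 1 / real k"
    using kpos by (simp add: field_simps)
  define y where "y = 2*pi*(frac x1 - frac x2)"
  have "Arg z1 - Arg z2 = 2*pi*(x1 - x2)" unfolding x1_def x2_def by (simp add: field_simps)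
  also have "x1 - x2 = (frac x1 - frac x2) + of_int (\<lfloor>x1\<rfloor> - \<lfloor>x2\<rfloor>)"
    by (simp add: frac_def)
  finally have "Arg z1 - Arg z2 = y + (2*pi) * of_int (\<lfloor>x1\<rfloor> - \<lfloor>x2\<rfloor>)"
    unfolding y_def by (simp add: algebra_simps)
  hence cA: "cos (Arg z1 - Arg z2) = cos y" by (simp only: cos_shift_int)
  have ya: "\<bar>y\<bar> = 2*pi*\<bar>frac x1 - frac x2\<bar>" unfolding y_def by (simp add: abs_mult)
  have "2*pi*\<bar>frac x1 - frac x2\<bar> \<le> 2*pi*(1/real k)"
    using fd pi_gt_zero by (intro mult_left_mono) auto
  hence "\<bar>y\<bar> \<le> 2*pi/k" using ya by simp
  moreover have "2*pi/k \<le> pi" using assms pi_gt_zero by (simp add: field_simps)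
  ultimately have "cos (2*pi/k) \<le> cos \<bar>y\<bar>" by (intro cos_monotone_0_pi_le) auto
  hence cy: "cos (2*pi/k) \<le> cos (Arg z1 - Arg z2)" using cA by simp
  have "Re z1 * Re z2 + Im z1 * Im z2 = norm z1 * norm z2 * cos (Arg z1 - Arg z2)"
    using assms(1,2) by (simp add: cos_diff cos_Arg sin_Arg field_simps)
  thus ?thesis using cy mult_left_mono[OF cy, of "norm z1 * norm z2"]
    by (simp add: mult_ac)
qed

lemma geo:
  fixes z1 z2 :: complex and c s :: real
  assumes "norm z1 \<le> norm z2" "0 \<le> c" "c \<le> 1" "0 \<le> s" "c^2 + s^2 = 1"
    and I: "Re z1 * Re z2 + Im z1 * Im z2 \<ge> c * norm z1 * norm z2"
  shows "norm (z1 - z2) \<le> norm z2 - (c - s) * norm z1"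
proof -
  define r where "r = norm z1"
  define d where "d = norm z2"
  have r2: "r^2 = Re z1 ^2 + Im z1 ^2" unfolding r_def by (simp add: cmod_power2)
  have d2: "d^2 = Re z2 ^2 + Im z2 ^2" unfolding d_def by (simp add: cmod_power2)
  have n2: "(norm (z1 - z2))^2 = r^2 + d^2 - 2*(Re z1 * Re z2 + Im z1 * Im z2)"
  proof -
    have "(norm (z1 - z2))^2 = (Re z1 - Re z2)^2 + (Im z1 - Im z2)^2" by (simp add: cmod_power2)
    thus ?thesis unfolding r2 d2 by (simp add: power2_eq_square algebra_simps)
  qed
  have rd: "0 \<le> r" "r \<le> d" using assms(1) unfolding r_def d_def by auto
  have cr: "c * r \<le> d" using rd assms(2,3) by (metis mult_left_le_one_le order_trans)
  have pos: "0 \<le> 2*s*r*(d - c*r)" using assms(4) rd cr by simp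
  have "(norm (z1 - z2))^2 \<le> r^2 + d^2 - 2*c*r*d" using n2 I unfolding r_def d_def by simp
  also have "\<dots> \<le> (d - (c - s) * r)^2"
  proof -
    have "(d - (c - s) * r)^2 - (r^2 + d^2 - 2*c*r*d) = 2*s*r*(d - c*r) + (c^2 + s^2 - 1)*r^2"
      by (simp add: power2_eq_square algebra_simps)
    moreover have "(c^2 + s^2 - 1)*r^2 = 0" using assms(5) by simp
    ultimately show ?thesis using pos by linarith
  qed
  finally have sq: "(norm (z1 - z2))^2 \<le> (d - (c - s) * r)^2" .
  have "(c - s) * r \<le> 1 * r" using assms(3,4) rd by (intro mult_right_mono) auto
  hence "0 \<le> d - (c - s) * r" using rd by simp
  with sq have "norm (z1 - z2) \<le> d - (c - s) * r" by (rule power2_le_imp_le)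
  thus ?thesis unfolding r_def d_def .
qed

lemma walk_len_nonneg: "walk_len p \<ge> 0"
  by (induction p rule: walk_len.induct) auto

lemma walk_append:
  "is_walk H p \<Longrightarrow> is_walk H q \<Longrightarrow> last p = hd q \<Longrightarrow>
   is_walk H (p @ tl q) \<and> walk_len (p @ tl q) = walk_len p + walk_len q"
proof (induction p rule: walk_len.induct)
  case 1 then show ?case by simp
next
  case (2 x)
  then show ?case by (cases q) auto
next
  case (3 x y xs)
  then show ?case by auto
qed

lemma walk_hd_last_append:
  "p \<noteq> [] \<Longrightarrow> q \<noteq> [] \<Longrightarrow> last p = hd q \<Longrightarrow> hd (p @ tl q) = hd p \<and> last (p @ tl q) = last q"
  by (cases q) auto

lemma walk_rev:
  assumes sym: "\<And>x y. (x, y) \<in> H \<Longrightarrow> (y, x) \<in> H"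
  shows "is_walk H p \<Longrightarrow> is_walk H (rev p) \<and> walk_len (rev p) = walk_len p"
proof (induction p rule: walk_len.induct)
  case 1 then show ?case by simp
next
  case (2 x) then show ?case by simp
next
  case (3 x y xs)
  hence IH: "is_walk H (rev (y # xs))" "walk_len (rev (y # xs)) = walk_len (y # xs)"
    and e: "(x, y) \<in> H" by auto
  have w2: "is_walk H [y, x]" using sym[OF e] by simp
  have "last (rev (y # xs)) = hd [y, x]" by simp
  from walk_append[OF IH(1) w2 this] have
    "is_walk H (rev (y # xs) @ [x]) \<and> walk_len (rev (y # xs) @ [x]) = walk_len (rev (y#xs)) + dist y x"
    by simp
  thus ?case using IH(2) by (simp add: dist_commute)
qed

lemma lex_le_iff: "lex_le a b \<longleftrightarrow> a \<le> b"
  by (cases a; cases b) (auto simp: lex_le_def)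

lemma edge_id_sym: "edge_id ID u v = edge_id ID v u"
proof -
  have m: "\<And>a b. lex_min a b = min a b" unfolding lex_min_def lex_le_iff min_def by simp
  show ?thesis unfolding edge_id_def m dir_edge_id_def by (simp add: dist_commute min.commute)
qed

lemma fst_edge_id: "fst (edge_id ID u v) = dist u v"
proof -
  have m: "\<And>a b. lex_min a b = min a b" unfolding lex_min_def lex_le_iff min_def by simp
  have "fst (min (dist u v, ID u, ID v) (dist v u, ID v, ID u)) = dist u v"
    by (simp add: min_def dist_commute[of v u])
  thus ?thesis unfolding edge_id_def m dir_edge_id_def .
qed

lemma lt_fst: "(x::real \<times> nat \<times> nat) < y \<Longrightarrow> fst x \<le> fst y"
  by (cases x; cases y) auto

lemma fst_lt: "fst (x::real \<times> nat \<times> nat) < fst y \<Longrightarrow> x < y"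
  by (cases x; cases y) auto

lemma yy_sym: "(x, y) \<in> yao_yao_edges k alpha ID V \<Longrightarrow> (y, x) \<in> yao_yao_edges k alpha ID V"
  unfolding yao_yao_edges_def by auto

lemma udg_sym: "(x, y) \<in> udg_edges V \<Longrightarrow> (y, x) \<in> udg_edges V"
  unfolding udg_edges_def by (auto simp: dist_commute)

lemma not_yy_cases:
  assumes "(u, v) \<in> udg_edges V" "(u, v) \<notin> yao_yao_dir k alpha ID V"
  shows "(\<exists>w. (u, w) \<in> udg_edges V \<and> cone_idx k alpha u w = cone_idx k alpha u v \<and> edge_id ID u w < edge_id ID u v)
       \<or> (\<exists>w. (w, v) \<in> udg_edges V \<and> cone_idx k alpha v w = cone_idx k alpha v u \<and> edge_id ID w v < edge_id ID u v)"
  using assms unfolding yao_yao_dir_def yao_edges_def lex_le_iff not_le[symmetric] by auto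

lemma key:
  fixes k :: nat and lam t alpha c s :: real and V :: "complex set" and ID :: "complex \<Rightarrow> nat"
  assumes k: "k > 8"
    and lam: "lam > 0"
    and cs: "c - s > 1 / (lam + 1)"
    and c_def: "c = cos (2 * pi / k)" and s_def: "s = sin (2 * pi / k)"
    and fin: "finite V"
    and civ: "civilized lam V"
    and t: "t \<ge> lam / ((lam + 1) * (c - s) - 1)"
  shows "(u, v) \<in> udg_edges V \<Longrightarrow> \<exists>p. walk_from_to (yao_yao_edges k alpha ID V) p u v \<and> walk_len p \<le> t * dist u v - (t - 1) * lam"
proof -
  define E where "E = udg_edges V"
  define H where "H = yao_yao_edges k alpha ID V"
  define f where "f = (\<lambda>x y. card {e \<in> E. edge_id ID (fst e) (snd e) < edge_id ID x y})"
  have finE: "finite E" unfolding E_def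
    by (rule finite_subset[of _ "V \<times> V"]) (auto simp: udg_edges_def fin)
  have th: "0 \<le> 2*pi/k" "2*pi/k \<le> pi" using k pi_gt_zero by (auto simp: field_simps)
  have th2: "2*pi/k \<le> pi/2" using k pi_gt_zero by (auto simp: field_simps)
  have "- (pi/2) \<le> 2*pi/k" using th(1) pi_gt_zero by linarith
  hence c01: "0 \<le> c" "c \<le> 1" unfolding c_def using th2
    by (auto intro!: cos_ge_zero)
  have s0: "0 \<le> s" unfolding s_def using th by (rule sin_ge_zero)
  have cs1: "c^2 + s^2 = 1" unfolding c_def s_def by simp
  have csl1: "c - s \<le> 1" using c01 s0 by simp
  have "1 / (lam + 1) > 0" using lam by simp
  hence cspos: "c - s > 0" using cs by linarith
  define D where "D = (lam + 1) * (c - s) - 1"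
  have Dpos: "D > 0" unfolding D_def using cs lam by (simp add: field_simps)
  have tD: "t * D \<ge> lam" using t Dpos unfolding D_def[symmetric] by (simp add: pos_divide_le_eq)
  have "lam * (c - s) \<le> lam * 1" using csl1 lam by (intro mult_left_mono) auto
  hence Dle: "D \<le> lam - 1 + (c - s)" unfolding D_def by (simp add: algebra_simps)
  have t1: "t \<ge> 1"
  proof -
    have "D \<le> lam" using Dle csl1 by simp
    hence "t * D \<ge> D" using tD by simp
    thus ?thesis using Dpos by simp
  qed
  have tpos: "t > 0" using t1 by simp
  have keyineq: "t * (1 - (c - s)) \<le> (t - 1) * lam"
  proof -
    have "t * D \<le> t * (lam - 1 + (c - s))" using Dle tpos by simp
    thus ?thesis using tD by (simp add: algebra_simps)
  qed
  have civ': "\<And>x y. (x, y) \<in> E \<Longrightarrow> lam \<le> dist x y \<and> dist x y \<le> 1 \<and> x \<noteq> y"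
    using civ unfolding E_def udg_edges_def civilized_def by auto
  have tri: "\<exists>p. walk_from_to H p a b \<and> walk_len p \<le> t * dist a b - (t - 1) * lam"
    if ab: "(a, b) \<in> E" and aw: "(a, w) \<in> E" and cone: "cone_idx k alpha a w = cone_idx k alpha a b"
      and lt: "edge_id ID a w < edge_id ID a b"
      and IH: "\<And>x y. (x, y) \<in> E \<Longrightarrow> edge_id ID x y < edge_id ID a b \<Longrightarrow>
                 \<exists>p. walk_from_to H p x y \<and> walk_len p \<le> t * dist x y - (t - 1) * lam"
    for a b w
  proof -
    have rd: "dist a w \<le> dist a b" using lt_fst[OF lt] by (simp add: fst_edge_id)
    have aw0: "w - a \<noteq> 0" and ab0: "b - a \<noteq> 0" using civ' ab aw by auto
    have "Re (w - a) * Re (b - a) + Im (w - a) * Im (b - a) \<ge> cos (2*pi/k) * norm (w - a) * norm (b - a)"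
      using cone_cos[OF aw0 ab0, of k alpha] cone k unfolding cone_idx_def by simp
    hence "norm ((w - a) - (b - a)) \<le> norm (b - a) - (c - s) * norm (w - a)"
      using rd c01 s0 cs1 unfolding c_def[symmetric]
      by (intro geo) (auto simp: dist_norm norm_minus_commute)
    hence g: "dist w b \<le> dist a b - (c - s) * dist a w"
      by (simp add: dist_norm norm_minus_commute)
    have law: "lam \<le> dist a w" "dist a w \<le> 1" "dist a b \<le> 1" using civ' aw ab by auto
    have "0 < (c - s) * dist a w" using cspos law lam by (intro mult_pos_pos) auto
    hence glt: "dist w b < dist a b" using g by simp
    have "w \<noteq> b" using lt by auto
    hence wb: "(w, b) \<in> E" using glt law ab aw unfolding E_def udg_edges_def by auto
    have wblt: "edge_id ID w b < edge_id ID a b" by (rule fst_lt) (simp add: fst_edge_id glt)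
    obtain p1 where p1: "walk_from_to H p1 a w" "walk_len p1 \<le> t * dist a w - (t - 1) * lam"
      using IH[OF aw lt] by blast
    obtain p2 where p2: "walk_from_to H p2 w b" "walk_len p2 \<le> t * dist w b - (t - 1) * lam"
      using IH[OF wb wblt] by blast
    have ne: "p1 \<noteq> []" "p2 \<noteq> []" using p1(1) p2(1) unfolding walk_from_to_def by auto
    have lh: "last p1 = hd p2" using p1(1) p2(1) unfolding walk_from_to_def by auto
    have W: "is_walk H (p1 @ tl p2) \<and> walk_len (p1 @ tl p2) = walk_len p1 + walk_len p2"
      using walk_append[of H p1 p2] p1(1) p2(1) lh unfolding walk_from_to_def by auto
    have "walk_from_to H (p1 @ tl p2) a b"
      using W walk_hd_last_append[OF ne lh] p1(1) p2(1) unfolding walk_from_to_def by auto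
    moreover have "walk_len (p1 @ tl p2) \<le> t * dist a b - (t - 1) * lam"
    proof -
      have A: "t * (1 - (c - s)) * dist a w \<le> t * (1 - (c - s))"
        using law csl1 tpos by (intro mult_left_le) auto
      have B: "t * dist w b \<le> t * (dist a b - (c - s) * dist a w)" using g tpos by simp
      show ?thesis using W p1(2) p2(2) A B keyineq by (simp add: algebra_simps)
    qed
    ultimately show ?thesis by blast
  qed
  have main: "\<forall>u v. f u v = n \<longrightarrow> (u, v) \<in> E \<longrightarrow>
     (\<exists>p. walk_from_to H p u v \<and> walk_len p \<le> t * dist u v - (t - 1) * lam)" for n
  proof (induction n rule: less_induct)
    case (less n)
    show ?case
    proof (intro allI impI)
      fix u v assume fn: "f u v = n" and uv: "(u, v) \<in> E"
      have IH: "\<exists>p. walk_from_to H p x y \<and> walk_len p \<le> t * dist x y - (t - 1) * lam"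
        if "(x, y) \<in> E" "edge_id ID x y < edge_id ID u v" for x y
      proof -
        have "{e \<in> E. edge_id ID (fst e) (snd e) < edge_id ID x y} \<subset> {e \<in> E. edge_id ID (fst e) (snd e) < edge_id ID u v}"
        proof
          show "{e \<in> E. edge_id ID (fst e) (snd e) < edge_id ID x y} \<subseteq> {e \<in> E. edge_id ID (fst e) (snd e) < edge_id ID u v}"
            using that(2) by auto
          have "(x, y) \<in> {e \<in> E. edge_id ID (fst e) (snd e) < edge_id ID u v}" using that by auto
          moreover have "(x, y) \<notin> {e \<in> E. edge_id ID (fst e) (snd e) < edge_id ID x y}" by auto
          ultimately show "{e \<in> E. edge_id ID (fst e) (snd e) < edge_id ID x y} \<noteq> {e \<in> E. edge_id ID (fst e) (snd e) < edge_id ID u v}"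
            by blast
        qed
        hence "f x y < f u v" unfolding f_def using finE by (intro psubset_card_mono) auto
        thus ?thesis using less.IH fn that by blast
      qed
      show "\<exists>p. walk_from_to H p u v \<and> walk_len p \<le> t * dist u v - (t - 1) * lam"
      proof (cases "(u, v) \<in> yao_yao_dir k alpha ID V")
        case True
        hence "(u, v) \<in> H" unfolding H_def yao_yao_edges_def by auto
        hence "walk_from_to H [u, v] u v" unfolding walk_from_to_def by simp
        moreover have "dist u v \<le> t * dist u v - (t - 1) * lam"
        proof -
          have "0 \<le> (t - 1) * (dist u v - lam)" using t1 civ' uv by simp
          thus ?thesis by (simp add: algebra_simps)
        qed
        ultimately show ?thesis by (intro exI[of _ "[u, v]"]) simp
      next
        case False
        from not_yy_cases[OF uv[unfolded E_def] False] show ?thesis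
        proof
          assume "\<exists>w. (u, w) \<in> udg_edges V \<and> cone_idx k alpha u w = cone_idx k alpha u v \<and> edge_id ID u w < edge_id ID u v"
          then obtain w where "(u, w) \<in> E" "cone_idx k alpha u w = cone_idx k alpha u v" "edge_id ID u w < edge_id ID u v"
            unfolding E_def by blast
          from tri[OF uv this IH] show ?thesis by blast
        next
          assume "\<exists>w. (w, v) \<in> udg_edges V \<and> cone_idx k alpha v w = cone_idx k alpha v u \<and> edge_id ID w v < edge_id ID u v"
          then obtain w where w: "(w, v) \<in> E" "cone_idx k alpha v w = cone_idx k alpha v u" "edge_id ID w v < edge_id ID u v"
            unfolding E_def by blast
          have vu: "(v, u) \<in> E" and vw: "(v, w) \<in> E" using uv w(1) udg_sym unfolding E_def by auto
          have lt: "edge_id ID v w < edge_id ID v u" using w(3) edge_id_sym by metis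
          have IH': "\<exists>p. walk_from_to H p x y \<and> walk_len p \<le> t * dist x y - (t - 1) * lam"
            if "(x, y) \<in> E" "edge_id ID x y < edge_id ID v u" for x y
            using IH[OF that(1)] that(2) edge_id_sym by metis
          obtain p where p: "walk_from_to H p v u" "walk_len p \<le> t * dist v u - (t - 1) * lam"
            using tri[OF vu vw w(2) lt IH'] by blast
          have R: "is_walk H (rev p) \<and> walk_len (rev p) = walk_len p"
            using walk_rev[of H p] yy_sym p(1) unfolding H_def walk_from_to_def by blast
          have "p \<noteq> []" using p(1) unfolding walk_from_to_def by auto
          hence "walk_from_to H (rev p) u v" using R p(1) unfolding walk_from_to_def
            by (simp add: hd_rev last_rev)
          thus ?thesis using R p(2) by (intro exI[of _ "rev p"]) (simp add: dist_commute)
        qed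
      qed
    qed
  qed
  show "(u, v) \<in> udg_edges V \<Longrightarrow> ?thesis" using main[of "f u v"] unfolding E_def H_def by blast
qed

lemma lift_walk:
  assumes E: "\<And>x y. (x, y) \<in> E \<Longrightarrow> \<exists>p. walk_from_to H p x y \<and> walk_len p \<le> t * dist x y"
  shows "is_walk E p \<Longrightarrow> \<exists>q. walk_from_to H q (hd p) (last p) \<and> walk_len q \<le> t * walk_len p"
proof (induction p rule: walk_len.induct)
  case 1 then show ?case by simp
next
  case (2 x) then show ?case by (intro exI[of _ "[x]"]) (simp add: walk_from_to_def)
next
  case (3 x y xs)
  from 3 obtain q2 where q2: "walk_from_to H q2 y (last (y # xs))" "walk_len q2 \<le> t * walk_len (y # xs)"
    by auto
  from 3 have "(x, y) \<in> E" by simp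
  then obtain q1 where q1: "walk_from_to H q1 x y" "walk_len q1 \<le> t * dist x y" using E by blast
  have ne: "q1 \<noteq> []" "q2 \<noteq> []" using q1(1) q2(1) unfolding walk_from_to_def by auto
  have lh: "last q1 = hd q2" using q1(1) q2(1) unfolding walk_from_to_def by auto
  have W: "is_walk H (q1 @ tl q2) \<and> walk_len (q1 @ tl q2) = walk_len q1 + walk_len q2"
    using walk_append[of H q1 q2] q1(1) q2(1) lh unfolding walk_from_to_def by auto
  have "walk_from_to H (q1 @ tl q2) x (last (x # y # xs))"
    using W walk_hd_last_append[OF ne lh] q1(1) q2(1) unfolding walk_from_to_def by auto
  moreover have "walk_len (q1 @ tl q2) \<le> t * walk_len (x # y # xs)"
    using W q1(2) q2(2) by (simp add: algebra_simps)
  ultimately show ?case by auto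
qed

theorem theorem1:
  fixes k :: nat and lam t alpha :: real and V :: "complex set" and ID :: "complex \<Rightarrow> nat"
  assumes "k > 8"
    and "lam > 0"
    and "cos (2 * pi / k) - sin (2 * pi / k) > 1 / (lam + 1)"
    and "finite V"
    and "inj_on ID V"
    and "connected_on V (udg_edges V)"
    and "civilized lam V"
    and "t \<ge> lam / ((lam + 1) * (cos (2 * pi / k) - sin (2 * pi / k)) - 1)"
  shows "length_spanner V (yao_yao_edges k alpha ID V) (udg_edges V) t"
proof -
  define H where "H = yao_yao_edges k alpha ID V"
  define E where "E = udg_edges V"
  define c where "c = cos (2 * pi / k)"
  define s where "s = sin (2 * pi / k)"
  have K: "\<And>u v. (u, v) \<in> E \<Longrightarrow> \<exists>p. walk_from_to H p u v \<and> walk_len p \<le> t * dist u v - (t - 1) * lam"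
    unfolding E_def H_def
    by (rule key[of k lam c s]) (use assms in \<open>simp_all add: c_def s_def\<close>)
  have t1: "t \<ge> 1"
  proof -
    have "1 / (lam + 1) > 0" using assms(2) by simp
    have "c - s \<le> 1"
    proof -
      have th: "0 \<le> 2*pi/k" "2*pi/k \<le> pi" using assms(1) pi_gt_zero by (auto simp: field_simps)
      have "0 \<le> s" unfolding s_def using th by (rule sin_ge_zero)
      moreover have "c \<le> 1" unfolding c_def by simp
      ultimately show ?thesis by simp
    qed
    define D where "D = (lam + 1) * (c - s) - 1"
    have Dpos: "D > 0" unfolding D_def using assms(2,3) by (simp add: field_simps c_def s_def)
    have "lam * (c - s) \<le> lam * 1" using \<open>c - s \<le> 1\<close> assms(2) by (intro mult_left_mono) auto
    hence "D \<le> lam" unfolding D_def using \<open>c - s \<le> 1\<close> by (simp add: algebra_simps)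
    moreover have "t * D \<ge> lam" using assms(8) Dpos unfolding D_def c_def s_def
      by (simp add: pos_divide_le_eq)
    ultimately have "t * D \<ge> 1 * D" by simp
    thus ?thesis using Dpos by (simp only: mult_le_cancel_right)
  qed
  have K': "\<And>u v. (u, v) \<in> E \<Longrightarrow> \<exists>p. walk_from_to H p u v \<and> walk_len p \<le> t * dist u v"
  proof -
    fix u v assume "(u, v) \<in> E"
    from K[OF this] obtain p where "walk_from_to H p u v" "walk_len p \<le> t * dist u v - (t - 1) * lam" by blast
    moreover have "0 \<le> (t - 1) * lam" using t1 assms(2) by simp
    ultimately show "\<exists>p. walk_from_to H p u v \<and> walk_len p \<le> t * dist u v" by (intro exI[of _ p]) auto
  qed
  have L: "\<exists>q. walk_from_to H q u v \<and> walk_len q \<le> t * walk_len p" if "walk_from_to E p u v" for p u v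
    using lift_walk[OF K', where p=p] that unfolding walk_from_to_def by auto
  show ?thesis unfolding length_spanner_def H_def[symmetric] E_def[symmetric]
  proof (intro ballI conjI)
    fix u v assume u: "u \<in> V" and v: "v \<in> V"
    obtain p where p: "walk_from_to E p u v" using assms(6) u v unfolding connected_on_def E_def by blast
    show "\<exists>p. walk_from_to H p u v" using L[OF p] by blast
    have bdd: "bdd_below (walk_len ` {p. walk_from_to H p u v})"
      by (rule bdd_belowI[of _ 0]) (auto simp: walk_len_nonneg)
    have "sp_len H u v / t \<le> Inf (walk_len ` {p. walk_from_to E p u v})"
    proof (rule cInf_greatest)
      show "walk_len ` {p. walk_from_to E p u v} \<noteq> {}" using p by blast
    next
      fix x assume "x \<in> walk_len ` {p. walk_from_to E p u v}"
      then obtain p' where p': "walk_from_to E p' u v" "x = walk_len p'" by blast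
      obtain q where q: "walk_from_to H q u v" "walk_len q \<le> t * walk_len p'" using L[OF p'(1)] by blast
      have "sp_len H u v \<le> walk_len q" unfolding sp_len_def
        by (rule cInf_lower[OF _ bdd]) (use q in auto)
      hence "sp_len H u v \<le> t * x" using q p' by simp
      thus "sp_len H u v / t \<le> x" using t1 by (simp add: divide_le_eq mult.commute)
    qed
    thus "sp_len H u v \<le> t * sp_len E u v" unfolding sp_len_def[of E] using t1
      by (simp add: divide_le_eq mult.commute)
  qed
qed

end
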